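(* Let $c_1>0>c_2$, $L=c_1-c_2$, $t_0>0$, and set $$q_1(0)=\ln L-c_1t_0-\ln\big(c_1-c_2e^{-Lt_0}\big),\qquad q_2(0)=-\ln L-c_2t_0+\ln\big(c_1e^{-Lt_0}-c_2\big).$$ Define for $\xi\in[q_1(0),q_2(0)]$ $$h_*(\xi)=\frac{4c_1^2c_2^2(1-e^{-Lt_0})^2e^{\xi}}{\Big(Le^{-c_1t_0}+c_2-c_1e^{-Lt_0}+\big(-c_1+c_2e^{-Lt_0}+Le^{c_2t_0}\big)e^{\xi}\Big)^2}.$$ Then (whenever the denominator does not vanish on $[q_1(0),q_2(0)]$) $$\int_{q_1(0)}^{q_2(0)}h_*(\xi)\,d\xi=-4c_1c_2 .$$ Moreover $h_*(\xi)=\lim_{t\uparrow t_0}u_x\big(t,y_m(t,\xi)\big)^2\,\partial_\xi y_m(t,\xi)$ for $\xi\in(q_1(0),q_2(0))$, where $u$ and $y_m$ are as in the context.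
   Context: For $t\neq t_0$ let $p_1(t)=\frac{c_1-c_2e^{L(t-t_0)}}{1-e^{L(t-t_0)}}$, $p_2(t)=\frac{c_2-c_1e^{L(t-t_0)}}{1-e^{L(t-t_0)}}$, $q_1(t)=\ln L+c_1(t-t_0)-\ln(c_1-c_2e^{L(t-t_0)})$, $q_2(t)=-\ln L+c_2(t-t_0)+\ln(c_1e^{L(t-t_0)}-c_2)$, and $u(t,x)=p_1(t)e^{-|x-q_1(t)|}+p_2(t)e^{-|x-q_2(t)|}$ for $t<t_0$. With $C(\xi)=c_2-c_1e^{-Lt_0}+Le^{\xi+c_2t_0}$ and $D(\xi)=L^2e^{-c_1t_0}-Lc_1e^{\xi}+Lc_2e^{\xi-Lt_0}$, let $$y_m(t,\xi)=\ln\!\left(\frac{e^{c_2(t-t_0)}}{L}\cdot\frac{(c_1e^{L(t-t_0)}-c_2)D(\xi)+L^2e^{c_1(t-t_0)}C(\xi)}{D(\xi)+(c_1e^{c_2(t-t_0)}-c_2e^{c_1(t-t_0)})C(\xi)}\right),$$ the characteristic (solution of $\partial_t y=u(t,y)$, $y(0,\xi)=\xi$) starting between the two peaks. *)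

theory Defs
  imports "HOL-Analysis.Analysis"
begin

definition pk_p1 :: "real \<Rightarrow> real \<Rightarrow> real \<Rightarrow> real \<Rightarrow> real" where
  "pk_p1 c1 c2 t0 t = (c1 - c2 * exp ((c1 - c2) * (t - t0))) / (1 - exp ((c1 - c2) * (t - t0)))"

definition pk_p2 :: "real \<Rightarrow> real \<Rightarrow> real \<Rightarrow> real \<Rightarrow> real" where
  "pk_p2 c1 c2 t0 t = (c2 - c1 * exp ((c1 - c2) * (t - t0))) / (1 - exp ((c1 - c2) * (t - t0)))"

definition pk_q1 :: "real \<Rightarrow> real \<Rightarrow> real \<Rightarrow> real \<Rightarrow> real" where
  "pk_q1 c1 c2 t0 t = ln (c1 - c2) + c1 * (t - t0) - ln (c1 - c2 * exp ((c1 - c2) * (t - t0)))"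

definition pk_q2 :: "real \<Rightarrow> real \<Rightarrow> real \<Rightarrow> real \<Rightarrow> real" where
  "pk_q2 c1 c2 t0 t = - ln (c1 - c2) + c2 * (t - t0) + ln (c1 * exp ((c1 - c2) * (t - t0)) - c2)"

definition pk_u :: "real \<Rightarrow> real \<Rightarrow> real \<Rightarrow> real \<Rightarrow> real \<Rightarrow> real" where
  "pk_u c1 c2 t0 t x =
     pk_p1 c1 c2 t0 t * exp (- \<bar>x - pk_q1 c1 c2 t0 t\<bar>) + pk_p2 c1 c2 t0 t * exp (- \<bar>x - pk_q2 c1 c2 t0 t\<bar>)"

definition pk_C :: "real \<Rightarrow> real \<Rightarrow> real \<Rightarrow> real \<Rightarrow> real" where
  "pk_C c1 c2 t0 \<xi> = c2 - c1 * exp (- (c1 - c2) * t0) + (c1 - c2) * exp (\<xi> + c2 * t0)"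

definition pk_D :: "real \<Rightarrow> real \<Rightarrow> real \<Rightarrow> real \<Rightarrow> real" where
  "pk_D c1 c2 t0 \<xi> = (c1 - c2)^2 * exp (- c1 * t0) - (c1 - c2) * c1 * exp \<xi>
                     + (c1 - c2) * c2 * exp (\<xi> - (c1 - c2) * t0)"

definition pk_ym :: "real \<Rightarrow> real \<Rightarrow> real \<Rightarrow> real \<Rightarrow> real \<Rightarrow> real" where
  "pk_ym c1 c2 t0 t \<xi> =
     ln (exp (c2 * (t - t0)) / (c1 - c2) *
        (((c1 * exp ((c1 - c2) * (t - t0)) - c2) * pk_D c1 c2 t0 \<xi>
           + (c1 - c2)^2 * exp (c1 * (t - t0)) * pk_C c1 c2 t0 \<xi>)
         / (pk_D c1 c2 t0 \<xi> + (c1 * exp (c2 * (t - t0)) - c2 * exp (c1 * (t - t0))) * pk_C c1 c2 t0 \<xi>)))"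

definition pk_hstar_den :: "real \<Rightarrow> real \<Rightarrow> real \<Rightarrow> real \<Rightarrow> real" where
  "pk_hstar_den c1 c2 t0 \<xi> =
     (c1 - c2) * exp (- c1 * t0) + c2 - c1 * exp (- (c1 - c2) * t0)
     + (- c1 + c2 * exp (- (c1 - c2) * t0) + (c1 - c2) * exp (c2 * t0)) * exp \<xi>"

definition pk_hstar :: "real \<Rightarrow> real \<Rightarrow> real \<Rightarrow> real \<Rightarrow> real" where
  "pk_hstar c1 c2 t0 \<xi> =
     4 * c1^2 * c2^2 * (1 - exp (- (c1 - c2) * t0))^2 * exp \<xi> / (pk_hstar_den c1 c2 t0 \<xi>)^2"

end

theory Submission
  imports Defs
begin

lemma part1:
  fixes c1 c2 t0 :: real
  assumes c1: "c1 > 0" and c2: "c2 < 0" and t0: "t0 > 0"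
  and nz: "\<forall>\<xi>\<in>{pk_q1 c1 c2 t0 0 .. pk_q2 c1 c2 t0 0}. pk_hstar_den c1 c2 t0 \<xi> \<noteq> 0"
  shows "(pk_hstar c1 c2 t0 has_integral (- 4 * c1 * c2)) {pk_q1 c1 c2 t0 0 .. pk_q2 c1 c2 t0 0}"
proof -
  define L where "L = c1 - c2"
  define e where "e = exp (-(c1-c2)*t0)"
  define m where "m = exp (-c2*t0)"
  have L: "L > 0" using c1 c2 by (simp add: L_def)
  have e0: "e > 0" "e < 1" using L t0 by (auto simp: e_def L_def mult_neg_pos)
  have m: "m > 0" by (simp add: m_def)
  have ec1: "exp (-c1*t0) = e*m" unfolding e_def m_def by (simp add: exp_add[symmetric] algebra_simps)
  have ec2: "exp (c2*t0) = 1/m" unfolding m_def by (simp add: exp_minus divide_inverse)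
  define A where "A = L*e*m + c2 - c1*e"
  define B where "B = -c1 + c2*e + L/m"
  have den: "pk_hstar_den c1 c2 t0 x = A + B * exp x" for x
    unfolding pk_hstar_den_def A_def B_def ec1 ec2 L_def e_def[symmetric] by simp
  define K where "K = 4 * c1^2 * c2^2 * (1 - e)^2"
  have hs: "pk_hstar c1 c2 t0 x = K * exp x / (A + B * exp x)^2" for x
    unfolding pk_hstar_def den K_def e_def by simp
  have p1: "c1 - c2*e > 0" using c1 c2 e0 by (smt (verit) mult_neg_pos)
  have p2: "c1*e - c2 > 0" using c1 c2 e0 by (smt (verit) mult_pos_pos)
  define z1 where "z1 = L*e*m/(c1-c2*e)"
  define z2 where "z2 = m*(c1*e-c2)/L"
  have q1: "pk_q1 c1 c2 t0 0 = ln z1"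
  proof -
    have "exp ((c1-c2)*(0-t0)) = e" unfolding e_def by (simp add: algebra_simps)
    moreover have "ln e = -(c1-c2)*t0" "ln m = -c2*t0" unfolding e_def m_def by auto
    moreover have "ln z1 = ln L + ln e + ln m - ln (c1-c2*e)" unfolding z1_def using L e0 m p1
      by (simp add: ln_div ln_mult)
    ultimately show ?thesis unfolding pk_q1_def by (simp add: L_def algebra_simps)
  qed
  have q2: "pk_q2 c1 c2 t0 0 = ln z2"
  proof -
    have "exp ((c1-c2)*(0-t0)) = e" unfolding e_def by (simp add: algebra_simps)
    moreover have "ln e = -(c1-c2)*t0" "ln m = -c2*t0" unfolding e_def m_def by auto
    moreover have "ln z2 = ln m + ln (c1*e-c2) - ln L" unfolding z2_def using L e0 m p2
      by (simp add: ln_div ln_mult)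
    ultimately show ?thesis unfolding pk_q2_def by (simp add: L_def algebra_simps)
  qed
  have z1p: "z1 > 0" unfolding z1_def using L e0 m p1 by simp
  have z2p: "z2 > 0" unfolding z2_def using L e0 m p2 by simp
  have d1: "A + B*z1 = c1*c2*(1-e)^2/(c1-c2*e)"
    unfolding A_def B_def z1_def L_def using p1 m by (simp add: field_simps) (simp add: algebra_simps power2_eq_square)
  have d2: "A + B*z2 = m*c1*c2*(1-e)^2/L"
    unfolding A_def B_def z2_def using L m by (simp add: field_simps) (simp add: L_def algebra_simps power2_eq_square)
  have zd: "z2 - z1 = -c1*c2*(1-e)^2*m/(L*(c1-c2*e))"
    unfolding z1_def z2_def using L p1 by (simp add: field_simps) (simp add: L_def algebra_simps power2_eq_square)
  have ne: "(1-e)^2 > 0" using e0 by simp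
  have "c1*c2 < 0" using c1 c2 by (simp add: mult_pos_neg)
  hence "-c1*c2*(1-e)^2*m > 0" using ne m by (simp add: mult_neg_pos mult_pos_pos)
  moreover have "L*(c1-c2*e) > 0" using L p1 by simp
  ultimately have "z2 - z1 > 0" unfolding zd by (rule divide_pos_pos)
  hence "z1 \<le> z2" by simp
  hence le: "ln z1 \<le> ln z2" using z1p z2p by simp
  have D1: "A + B*z1 \<noteq> 0" using nz q1 q2 le z1p den[of "ln z1"] by auto
  define G where "G x = K*(exp x - z1)/((A+B*z1)*(A + B*exp x))" for x
  have "(G has_vector_derivative pk_hstar c1 c2 t0 x) (at x within {ln z1..ln z2})"
    if "x \<in> {ln z1..ln z2}" for x
  proof -
    have nx: "A + B*exp x \<noteq> 0" using nz that q1 q2 den by auto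
    have "(G has_real_derivative pk_hstar c1 c2 t0 x) (at x)"
      unfolding G_def hs
      apply (rule derivative_eq_intros refl | simp add: nx D1)+
      using nx D1 apply (simp add: divide_simps)
      apply (simp add: algebra_simps power2_eq_square)
      done
    thus ?thesis
      by (simp add: has_real_derivative_iff_has_vector_derivative has_vector_derivative_at_within)
  qed
  from fundamental_theorem_of_calculus[OF le this]
  have "(pk_hstar c1 c2 t0 has_integral (G (ln z2) - G (ln z1))) {ln z1..ln z2}" by blast
  moreover have "G (ln z2) - G (ln z1) = -4*c1*c2"
  proof -
    have "G (ln z2) - G (ln z1) = K*(z2-z1)/((A+B*z1)*(A+B*z2))"
      unfolding G_def using z1p z2p D1 by (simp add: field_simps)
    also have "\<dots> = -4*c1*c2"
    proof -
      have gen: "4*c1^2*c2^2*P*(-c1*c2*P*m/(L*q))/((c1*c2*P/q)*(m*c1*c2*P/L)) = -4*c1*c2"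
        if "P \<noteq> 0" "q \<noteq> 0" for P q
        using that L m c1 c2 by (simp add: field_simps power2_eq_square)
      show ?thesis unfolding d1 d2 zd K_def
        using gen[of "(1-e)^2" "c1-c2*e"] ne p1 by simp
    qed
    finally show ?thesis .
  qed
  ultimately show ?thesis using q1 q2 by simp
qed

lemma part2:
  fixes c1 c2 t0 \<xi> :: real
  assumes c1: "c1 > 0" and c2: "c2 < 0" and t0: "t0 > 0"
  and xi: "\<xi> \<in> {pk_q1 c1 c2 t0 0 <..< pk_q2 c1 c2 t0 0}"
  shows "((\<lambda>t. (deriv (pk_u c1 c2 t0 t) (pk_ym c1 c2 t0 t \<xi>))^2 * deriv (pk_ym c1 c2 t0 t) \<xi>)
                 \<longlongrightarrow> pk_hstar c1 c2 t0 \<xi>) (at_left t0)"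
proof -
  define L where "L = c1 - c2"
  define e where "e = exp (-(c1-c2)*t0)"
  define m where "m = exp (-c2*t0)"
  have L: "L > 0" using c1 c2 by (simp add: L_def)
  have e0: "e > 0" "e < 1" using L t0 by (auto simp: e_def L_def mult_neg_pos)
  have m: "m > 0" by (simp add: m_def)
  have ec1: "exp (-c1*t0) = e*m" unfolding e_def m_def by (simp add: exp_add[symmetric] algebra_simps)
  have ec2: "exp (c2*t0) = 1/m" unfolding m_def by (simp add: exp_minus divide_inverse)
  define A where "A = L*e*m + c2 - c1*e"
  define B where "B = -c1 + c2*e + L/m"
  have den: "pk_hstar_den c1 c2 t0 x = A + B * exp x" for x
    unfolding pk_hstar_den_def A_def B_def ec1 ec2 L_def e_def[symmetric] by simp
  define K where "K = 4 * c1^2 * c2^2 * (1 - e)^2"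
  have hs: "pk_hstar c1 c2 t0 x = K * exp x / (A + B * exp x)^2" for x
    unfolding pk_hstar_def den K_def e_def by simp
  have p1: "c1 - c2*e > 0" using c1 c2 e0 by (smt (verit) mult_neg_pos)
  have p2: "c1*e - c2 > 0" using c1 c2 e0 by (smt (verit) mult_pos_pos)
  define z1 where "z1 = L*e*m/(c1-c2*e)"
  define z2 where "z2 = m*(c1*e-c2)/L"
  have q1: "pk_q1 c1 c2 t0 0 = ln z1"
  proof -
    have "exp ((c1-c2)*(0-t0)) = e" unfolding e_def by (simp add: algebra_simps)
    moreover have "ln e = -(c1-c2)*t0" "ln m = -c2*t0" unfolding e_def m_def by auto
    moreover have "ln z1 = ln L + ln e + ln m - ln (c1-c2*e)" unfolding z1_def using L e0 m p1
      by (simp add: ln_div ln_mult)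
    ultimately show ?thesis unfolding pk_q1_def by (simp add: L_def algebra_simps)
  qed
  have q2: "pk_q2 c1 c2 t0 0 = ln z2"
  proof -
    have "exp ((c1-c2)*(0-t0)) = e" unfolding e_def by (simp add: algebra_simps)
    moreover have "ln e = -(c1-c2)*t0" "ln m = -c2*t0" unfolding e_def m_def by auto
    moreover have "ln z2 = ln m + ln (c1*e-c2) - ln L" unfolding z2_def using L e0 m p2
      by (simp add: ln_div ln_mult)
    ultimately show ?thesis unfolding pk_q2_def by (simp add: L_def algebra_simps)
  qed
  have z1p: "z1 > 0" unfolding z1_def using L e0 m p1 by simp
  have z2p: "z2 > 0" unfolding z2_def using L e0 m p2 by simp
  define z where "z = exp \<xi>"
  have xi': "ln z1 < \<xi>" "\<xi> < ln z2" using xi q1 q2 by auto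
  have zz: "z1 < z" "z < z2" unfolding z_def
    using exp_less_mono[OF xi'(1)] exp_less_mono[OF xi'(2)] z1p z2p by auto
  have z0: "z > 0" unfolding z_def by simp
  have zx: "exp \<xi> = z" unfolding z_def ..
  have ee: "exp (\<xi> - (c1-c2)*t0) = z*e" unfolding z_def e_def by (simp add: mult_exp_exp algebra_simps)
  define C0 where "C0 = pk_C c1 c2 t0 \<xi>"
  define D0 where "D0 = pk_D c1 c2 t0 \<xi>"
  define C' where "C' = L*z/m"
  define D' where "D' = L*(c2*e-c1)*z"
  have C0e: "C0 = c2 - c1*e + L*z/m"
    unfolding C0_def pk_C_def z_def e_def[symmetric] L_def
    by (simp add: exp_add ec2)
  have D0e: "D0 = L^2*e*m - L*c1*z + L*c2*z*e"
  proof -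
    show ?thesis using ee unfolding D0_def pk_D_def ec1 L_def by (simp add: zx)
  qed
  have C0n: "C0 < 0"
  proof -
    have "C0 = L*(z - z2)/m" unfolding C0e z2_def using L m by (simp add: field_simps L_def)
    thus ?thesis using zz L m by (simp add: divide_neg_pos mult_pos_neg)
  qed
  have D0n: "D0 < 0"
  proof -
    have "D0 = L*(c2*e-c1)*(z - z1)" unfolding D0e z1_def using L p1
      by (simp add: field_simps power2_eq_square)
    thus ?thesis using zz L p1 by (simp add: mult_pos_neg mult_neg_pos)
  qed
  have Cder: "(pk_C c1 c2 t0 has_real_derivative C') (at \<xi>)"
  proof -
    have "((\<lambda>x. c2 - c1 * exp (- (c1 - c2) * t0) + (c1 - c2) * exp (x + c2 * t0)) has_real_derivative C') (at \<xi>)"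
      by (rule derivative_eq_intros refl)+ (simp add: C'_def L_def z_def exp_add ec2)
    thus ?thesis unfolding pk_C_def by (simp add: fun_eq_iff)
  qed
  have Dder: "(pk_D c1 c2 t0 has_real_derivative D') (at \<xi>)"
  proof -
    have "((\<lambda>x. (c1 - c2)^2 * exp (- c1 * t0) - (c1 - c2) * c1 * exp x
                     + (c1 - c2) * c2 * exp (x - (c1 - c2) * t0)) has_real_derivative D') (at \<xi>)"
      by (rule derivative_eq_intros refl)+
         (simp add: zx ee, simp add: D'_def L_def algebra_simps)
    thus ?thesis unfolding pk_D_def by (simp add: fun_eq_iff)
  qed
  define M0 where "M0 = D0 + L*C0"
  have M0n: "M0 < 0" unfolding M0_def using C0n D0n L by (simp add: mult_pos_neg add_neg_neg)
  have M0den: "M0 = L * (A + B*z)"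
    unfolding M0_def C0e D0e A_def B_def using m by (simp add: field_simps power2_eq_square)
  have Q: "D'*C0 - D0*C' = -L*c1*c2*(1-e)^2*z"
    unfolding D'_def C'_def C0e D0e using m by (simp add: field_simps power2_eq_square L_def)
  define xx where "xx t = exp (c1*(t-t0))" for t
  define w where "w t = exp (c2*(t-t0))" for t
  define E where "E t = exp ((c1-c2)*(t-t0))" for t
  define a where "a t = c1*E t - c2" for t
  define b where "b t = (c1-c2)^2 * xx t" for t
  define cc where "cc t = c1*w t - c2*xx t" for t
  define M where "M t = D0 + cc t * C0" for t
  define N where "N t = a t * D0 + b t * C0" for t
  define Gt where "Gt t = -c1*c2*w t*(L^2*E t*(M t)^2 + (N t)^2)^2 * (D'*C0 - D0*C')/((M t)^3*(N t)^3)" for t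
  let ?F = "at_left t0"
  have hx: "(xx \<longlongrightarrow> 1) ?F" unfolding xx_def by (rule tendsto_eq_intros refl)+ simp
  have hw: "(w \<longlongrightarrow> 1) ?F" unfolding w_def by (rule tendsto_eq_intros refl)+ simp
  have hE: "(E \<longlongrightarrow> 1) ?F" unfolding E_def by (rule tendsto_eq_intros refl)+ simp
  have hM: "(M \<longlongrightarrow> M0) ?F" unfolding M_def cc_def M0_def
    by (rule tendsto_eq_intros refl hx hw)+ (simp add: L_def)
  have hN: "(N \<longlongrightarrow> L*M0) ?F" unfolding N_def a_def b_def M0_def
    by (rule tendsto_eq_intros refl hx hE)+ (simp add: L_def power2_eq_square algebra_simps)
  have hG: "(Gt \<longlongrightarrow> -c1*c2*(L^2*M0^2 + (L*M0)^2)^2 * (D'*C0 - D0*C')/(M0^3*(L*M0)^3)) ?F"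
    unfolding Gt_def
    by (rule tendsto_eq_intros refl hx hw hE hM hN)+ (use M0n L in simp)+
  have lim: "-c1*c2*(L^2*M0^2 + (L*M0)^2)^2 * (D'*C0 - D0*C')/(M0^3*(L*M0)^3) = pk_hstar c1 c2 t0 \<xi>"
  proof -
    have dn: "A + B*z \<noteq> 0" using M0n M0den by auto
    have gen: "-c1*c2*(L^2*(L*d)^2 + (L*(L*d))^2)^2 * (-L*c1*c2*P*z)/((L*d)^3*(L*(L*d))^3)
               = 4*c1^2*c2^2*P*z/d^2" if "d \<noteq> 0" for d P
      using that L by (simp add: divide_simps) algebra
    show ?thesis unfolding hs Q M0den K_def zx using gen[OF dn] by simp
  qed
  have ev1: "eventually (\<lambda>t. M t < 0) ?F" using hM M0n by (rule order_tendstoD)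
  have LM0: "L*M0 < 0" using M0n L by (simp add: mult_pos_neg)
  have ev2: "eventually (\<lambda>t. N t < 0) ?F" using hN LM0 by (rule order_tendstoD)
  have ev3: "eventually (\<lambda>t. t < t0) ?F" by (simp add: eventually_at_filter)
  have "eventually (\<lambda>t. Gt t = (deriv (pk_u c1 c2 t0 t) (pk_ym c1 c2 t0 t \<xi>))^2 * deriv (pk_ym c1 c2 t0 t) \<xi>) ?F"
    using ev1 ev2 ev3
  proof eventually_elim
    case (elim t)
    have Mn: "M t < 0" and Nn: "N t < 0" and tl: "t < t0" using elim by auto
    have wp: "w t > 0" and xp: "xx t > 0" by (auto simp: w_def xx_def)
    have Ex: "xx t = E t * w t" unfolding xx_def E_def w_def by (simp add: mult_exp_exp algebra_simps)
    have E0: "E t > 0" by (simp add: E_def)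
    have E1: "E t < 1" unfolding E_def using L tl by (simp add: L_def mult_pos_neg)
    have pa: "c1 - c2 * E t > 0" using c1 c2 E0 by (smt (verit) mult_neg_pos)
    have pb: "c1 * E t - c2 > 0" using c1 c2 E0 by (smt (verit) mult_pos_pos)
    define Y where "Y = w t / L * (N t / M t)"
    have NM: "N t / M t > 0" using Mn Nn by (simp add: divide_neg_neg)
    have Yp: "Y > 0" unfolding Y_def using wp L NM by (intro mult_pos_pos) auto
    have ymf: "pk_ym c1 c2 t0 t = (\<lambda>x. ln (w t / L * ((a t * pk_D c1 c2 t0 x + b t * pk_C c1 c2 t0 x)
                  / (pk_D c1 c2 t0 x + cc t * pk_C c1 c2 t0 x))))"
      unfolding pk_ym_def a_def b_def cc_def xx_def w_def E_def L_def by (simp add: fun_eq_iff)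
    have ym: "pk_ym c1 c2 t0 t \<xi> = ln Y"
      unfolding ymf Y_def M_def N_def C0_def D0_def by simp
    define Q1 where "Q1 = pk_q1 c1 c2 t0 t"
    define Q2 where "Q2 = pk_q2 c1 c2 t0 t"
    have eq1: "exp Q1 = L * xx t / (c1 - c2 * E t)"
    proof -
      have "Q1 = ln L + c1*(t-t0) - ln (c1 - c2 * E t)" unfolding Q1_def pk_q1_def E_def L_def ..
      thus ?thesis using L pa by (simp add: exp_diff exp_add xx_def)
    qed
    have eq2: "exp Q2 = w t * (c1 * E t - c2) / L"
    proof -
      have "Q2 = - ln L + c2*(t-t0) + ln (c1 * E t - c2)" unfolding Q2_def pk_q2_def E_def L_def ..
      hence "exp Q2 = exp (- ln L) * exp (c2*(t-t0)) * exp (ln (c1 * E t - c2))" by (simp only: exp_add)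
      also have "\<dots> = w t * (c1 * E t - c2) / L" using L pb by (simp add: exp_minus w_def field_simps)
      finally show ?thesis .
    qed
    have Mnz: "M t \<noteq> 0" using Mn by simp
    have Nid: "N t*(c1-c2*E t) - L^2*E t*M t = -c1*c2*(1-E t)^2*D0"
      unfolding N_def M_def a_def b_def cc_def Ex L_def by (simp add: algebra_simps power2_eq_square)
    have Mid: "(c1*E t - c2)*M t - N t = -c1*c2*w t*(1-E t)^2*C0"
      unfolding N_def M_def a_def b_def cc_def Ex L_def by (simp add: algebra_simps power2_eq_square)
    have id1': "Y - exp Q1 = w t*(N t*(c1-c2*E t) - L^2*E t*M t)/(L*M t*(c1-c2*E t))"
      unfolding Y_def eq1 Ex using L Mnz pa wp by (simp add: divide_simps) (simp add: algebra_simps power2_eq_square)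
    have id2': "exp Q2 - Y = w t*((c1*E t - c2)*M t - N t)/(L*M t)"
      unfolding Y_def eq2 using L Mnz wp by (simp add: divide_simps) (simp add: algebra_simps)
    have id1: "Y - exp Q1 = - w t * c1 * c2 * (1 - E t)^2 * D0 / (L * M t * (c1 - c2 * E t))"
      unfolding id1' Nid by (simp add: algebra_simps)
    have id2: "exp Q2 - Y = - c1 * c2 * (w t * w t) * (1 - E t)^2 * C0 / (L * M t)"
      unfolding id2' Mid by (simp add: algebra_simps)
    have cc0: "- c1 * c2 > 0" using c1 c2 by (simp add: mult_pos_neg)
    have sq: "(1 - E t)^2 > 0" using E1 by simp
    have o1: "exp Q1 < Y"
    proof -
      have "- w t * c1 * c2 * (1 - E t)^2 * D0 / (L * M t * (c1 - c2 * E t)) > 0"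
      proof (rule divide_neg_neg)
        have "- c1 * c2 * w t * (1 - E t)^2 > 0" using mult_pos_pos[OF mult_pos_pos[OF cc0 wp] sq] by simp
        thus "- w t * c1 * c2 * (1 - E t)^2 * D0 < 0" using D0n
          by (smt (verit, best) mult_pos_neg mult.commute mult.assoc mult_minus_left)
        show "L * M t * (c1 - c2 * E t) < 0" using L Mn pa by (simp add: mult_pos_neg mult_neg_pos)
      qed
      thus ?thesis using id1 by simp
    qed
    have o2: "Y < exp Q2"
    proof -
      have "- c1 * c2 * (w t * w t) * (1 - E t)^2 * C0 / (L * M t) > 0"
      proof (rule divide_neg_neg)
        have "- c1 * c2 * (w t * w t) * (1 - E t)^2 > 0"
          using mult_pos_pos[OF mult_pos_pos[OF cc0 mult_pos_pos[OF wp wp]] sq] by simp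
        thus "- c1 * c2 * (w t * w t) * (1 - E t)^2 * C0 < 0" using C0n by (rule mult_pos_neg)
        show "L * M t < 0" using L Mn by (simp add: mult_pos_neg)
      qed
      thus ?thesis using id2 by simp
    qed
    have lo: "Q1 < ln Y" using o1 Yp by (metis exp_gt_zero ln_exp ln_less_cancel_iff)
    have hi: "ln Y < Q2" using o2 Yp by (metis exp_gt_zero ln_exp ln_less_cancel_iff)
    define P1 where "P1 = pk_p1 c1 c2 t0 t"
    define P2 where "P2 = pk_p2 c1 c2 t0 t"
    have du: "(pk_u c1 c2 t0 t has_real_derivative (- P1 * exp Q1 / Y + P2 * Y / exp Q2)) (at (ln Y))"
    proof -
      have "((\<lambda>x. P1 * exp (- (x - Q1)) + P2 * exp (- (Q2 - x))) has_real_derivative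
              (- P1 * exp Q1 / Y + P2 * Y / exp Q2)) (at (ln Y))"
        by (rule derivative_eq_intros refl)+
           (use Yp in \<open>simp add: exp_diff exp_minus field_simps\<close>)
      then show ?thesis
      proof (rule has_field_derivative_transform_within_open)
        show "open {Q1<..<Q2}" by simp
        show "ln Y \<in> {Q1<..<Q2}" using lo hi by simp
        fix x assume "x \<in> {Q1<..<Q2}"
        thus "P1 * exp (- (x - Q1)) + P2 * exp (- (Q2 - x)) = pk_u c1 c2 t0 t x"
          unfolding pk_u_def P1_def P2_def Q1_def[symmetric] Q2_def[symmetric] by simp
      qed
    qed
    define Dy where "Dy = ((a t * D' + b t * C') * M t - N t * (D' + cc t * C')) / (M t * N t)"
    have Mt: "pk_D c1 c2 t0 \<xi> + cc t * pk_C c1 c2 t0 \<xi> = M t" by (simp add: M_def C0_def D0_def)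
    have Nt: "a t * pk_D c1 c2 t0 \<xi> + b t * pk_C c1 c2 t0 \<xi> = N t" by (simp add: N_def C0_def D0_def)
    define F where "F x = w t / L * ((a t * pk_D c1 c2 t0 x + b t * pk_C c1 c2 t0 x)
                  / (pk_D c1 c2 t0 x + cc t * pk_C c1 c2 t0 x))" for x
    have FY: "F \<xi> = Y" unfolding F_def Y_def Mt Nt ..
    have dF: "(F has_real_derivative w t / L * (((a t*D' + b t*C')*M t - N t*(D' + cc t*C'))/(M t)^2)) (at \<xi>)"
      unfolding F_def
      apply (rule derivative_eq_intros Cder Dder refl)+
      using Mnz apply (simp add: Mt)
      apply (simp only: mult_zero_left add_0_left Mt Nt)
      apply (simp add: power2_eq_square algebra_simps)
      done
    have dy: "(pk_ym c1 c2 t0 t has_real_derivative Dy) (at \<xi>)"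
    proof -
      have "((\<lambda>x. ln (F x)) has_real_derivative 1 / F \<xi> * (w t / L * (((a t*D' + b t*C')*M t - N t*(D' + cc t*C'))/(M t)^2))) (at \<xi>)"
        using DERIV_chain2[OF DERIV_ln_divide dF] FY Yp by simp
      moreover have "1 / F \<xi> * (w t / L * (((a t*D' + b t*C')*M t - N t*(D' + cc t*C'))/(M t)^2)) = Dy"
        unfolding FY Y_def Dy_def using wp L Mnz Nn by (simp add: divide_simps) (simp add: algebra_simps power2_eq_square)
      ultimately show ?thesis unfolding ymf F_def by simp
    qed
    have U: "- P1 * exp Q1 / Y + P2 * Y / exp Q2 = - L / (1 - E t) * (xx t / Y + Y / w t)"
    proof -
      have hP1: "P1 = (c1 - c2 * E t) / (1 - E t)" unfolding P1_def pk_p1_def E_def ..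
      have hP2: "P2 = (c2 - c1 * E t) / (1 - E t)" unfolding P2_def pk_p2_def E_def ..
      show ?thesis unfolding hP1 hP2 eq1 eq2 using E1 pa pb wp L Yp
        by (simp add: divide_simps) (simp add: algebra_simps)
    qed
    have S2: "xx t / Y + Y / w t = (L^2 * E t * (M t)^2 + (N t)^2) / (L * M t * N t)"
      unfolding Y_def Ex using wp L Mn Nn by (simp add: divide_simps) (simp add: algebra_simps power2_eq_square)
    have S3: "(a t * D' + b t * C') * M t - N t * (D' + cc t * C') = (a t * cc t - b t) * (D'*C0 - D0*C')"
      unfolding M_def N_def by (simp add: algebra_simps)
    have S4: "a t * cc t - b t = - c1 * c2 * w t * (1 - E t)^2"
      unfolding a_def b_def cc_def Ex by (simp add: algebra_simps power2_eq_square)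
    have gen: "(- L / (1 - EE) * ((L^2 * EE * MM^2 + NN^2) / (L * MM * NN)))^2 *
                ((- c1 * c2 * ww * (1 - EE)^2) * QQ / (MM * NN))
              = -c1*c2*ww*(L^2*EE*MM^2 + NN^2)^2 * QQ/(MM^3*NN^3)"
      if "EE \<noteq> 1" "MM \<noteq> 0" "NN \<noteq> 0" for EE MM NN ww QQ
      using that L by (simp add: divide_simps) algebra
    have "deriv (pk_u c1 c2 t0 t) (pk_ym c1 c2 t0 t \<xi>) = - L / (1 - E t) * (xx t / Y + Y / w t)"
      unfolding ym using DERIV_imp_deriv[OF du] U by simp
    moreover have "deriv (pk_ym c1 c2 t0 t) \<xi> = Dy" using DERIV_imp_deriv[OF dy] .
    ultimately show ?case
      unfolding Gt_def Dy_def S2 S3 S4 using gen[of "E t" "M t" "N t" "w t" "D'*C0 - D0*C'"] E1 Mn Nn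
      by simp
  qed
  from Lim_transform_eventually[OF hG this] show ?thesis using lim by simp
qed

theorem mainTheorem6:
  fixes c1 c2 t0 :: real
  assumes "c1 > 0" and "c2 < 0" and "t0 > 0"
  shows "((\<forall>\<xi>\<in>{pk_q1 c1 c2 t0 0 .. pk_q2 c1 c2 t0 0}. pk_hstar_den c1 c2 t0 \<xi> \<noteq> 0) \<longrightarrow>
            (pk_hstar c1 c2 t0 has_integral (- 4 * c1 * c2)) {pk_q1 c1 c2 t0 0 .. pk_q2 c1 c2 t0 0})
         \<and> (\<forall>\<xi>\<in>{pk_q1 c1 c2 t0 0 <..< pk_q2 c1 c2 t0 0}.
              ((\<lambda>t. (deriv (pk_u c1 c2 t0 t) (pk_ym c1 c2 t0 t \<xi>))^2 * deriv (pk_ym c1 c2 t0 t) \<xi>)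
                 \<longlongrightarrow> pk_hstar c1 c2 t0 \<xi>) (at_left t0))"
  using part1[OF assms] part2[OF assms] by blast

end
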